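(* Let $A,B$ be finite-dimensional Hilbert spaces, $\rho$ a density matrix on $A\otimes B$, and $|\phi\rangle\in A\otimes B$ a pure state of Schmidt rank at most $r$. Let $W\subseteq A$ be a subspace with orthogonal projection $\Pi_W$ such that $\|(I-\Pi_W)\,\mathrm{tr}_B(\rho)\,(I-\Pi_W)\|_\infty\le\eta$. Then \[ \big|\langle\phi|(\Pi_W\otimes I)\rho(\Pi_W\otimes I)|\phi\rangle-\langle\phi|\rho|\phi\rangle\big|\le 2r\sqrt\eta. \]
   Context: $\|\cdot\|_\infty$ is the operator norm; the Schmidt rank of $|\phi\rangle$ is the rank of its Schmidt decomposition with respect to the bipartition $A\otimes B$. *)

theory Defs
  imports "HOL-Analysis.Analysis"
begin

text \<open>Finite-dimensional Hilbert spaces A, B are modelled as complex^'a and complex^'b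
  (arbitrary finite index types); A \<otimes> B is complex^('a \<times> 'b).\<close>

definition cinner :: "complex^'n \<Rightarrow> complex^'n \<Rightarrow> complex" where
  "cinner u v = (\<Sum>i\<in>UNIV. cnj (u $ i) * v $ i)"

definition adjoint_mat :: "complex^'n^'m \<Rightarrow> complex^'m^'n" where
  "adjoint_mat M = (\<chi> i j. cnj (M $ j $ i))"

definition hermitian :: "complex^'n^'n \<Rightarrow> bool" where
  "hermitian M \<longleftrightarrow> adjoint_mat M = M"

definition psd :: "complex^'n^'n \<Rightarrow> bool" where
  "psd M \<longleftrightarrow> (\<forall>v. cinner v (M *v v) \<in> \<real> \<and> 0 \<le> Re (cinner v (M *v v)))"

definition density_matrix :: "complex^'n^'n \<Rightarrow> bool" where
  "density_matrix \<rho> \<longleftrightarrow> hermitian \<rho> \<and> psd \<rho> \<and> trace \<rho> = 1"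

text \<open>Orthogonal projection (onto its range W).\<close>
definition orth_proj :: "complex^'n^'n \<Rightarrow> bool" where
  "orth_proj P \<longleftrightarrow> hermitian P \<and> P ** P = P"

definition tensor_vec :: "complex^'a \<Rightarrow> complex^'b \<Rightarrow> complex^('a \<times> 'b)" where
  "tensor_vec u v = (\<chi> p. u $ fst p * v $ snd p)"

definition tensor_mat :: "complex^'a^'a \<Rightarrow> complex^'b^'b \<Rightarrow> complex^('a \<times> 'b)^('a \<times> 'b)" where
  "tensor_mat M N = (\<chi> p q. M $ fst p $ fst q * N $ snd p $ snd q)"

definition ptrace_B :: "complex^('a \<times> 'b::finite)^('a \<times> 'b) \<Rightarrow> complex^'a^'a" where
  "ptrace_B \<rho> = (\<chi> i k. \<Sum>j\<in>UNIV. \<rho> $ (i, j) $ (k, j))"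

definition op_norm :: "complex^'n^'m \<Rightarrow> real" where
  "op_norm M = onorm (\<lambda>v. M *v v)"

definition schmidt_decomp :: "complex^('a::finite \<times> 'b::finite) \<Rightarrow> nat \<Rightarrow> bool" where
  "schmidt_decomp \<phi> k \<longleftrightarrow> (\<exists>(s::nat \<Rightarrow> real) (e::nat \<Rightarrow> complex^'a) (f::nat \<Rightarrow> complex^'b).
     (\<forall>i<k. s i > 0) \<and>
     (\<forall>i<k. \<forall>j<k. cinner (e i) (e j) = (if i = j then 1 else 0)) \<and>
     (\<forall>i<k. \<forall>j<k. cinner (f i) (f j) = (if i = j then 1 else 0)) \<and>
     \<phi> = (\<Sum>i<k. complex_of_real (s i) *s tensor_vec (e i) (f i)))"

definition schmidt_rank :: "complex^('a::finite \<times> 'b::finite) \<Rightarrow> nat" where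
  "schmidt_rank \<phi> = (LEAST k. schmidt_decomp \<phi> k)"

end

theory Submission
  imports Defs
begin


lemma cinner_add_right: "cinner x (y + z) = cinner x y + cinner x z"
  by (simp add: cinner_def distrib_left sum.distrib)
lemma cinner_add_left: "cinner (x + y) z = cinner x z + cinner y z"
  by (simp add: cinner_def distrib_right sum.distrib)
lemma cinner_diff_right: "cinner x (y - z) = cinner x y - cinner x z"
  by (simp add: cinner_def right_diff_distrib sum_subtractf)
lemma cinner_diff_left: "cinner (x - y) z = cinner x z - cinner y z"
  by (simp add: cinner_def left_diff_distrib sum_subtractf)
lemma cinner_scale_right: "cinner x (c *s y) = c * cinner x y"
  by (simp add: cinner_def sum_distrib_left algebra_simps)
lemma cinner_scale_left: "cinner (c *s x) y = cnj c * cinner x y"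
  by (simp add: cinner_def sum_distrib_left algebra_simps)
lemma cinner_zero_right[simp]: "cinner x 0 = 0" by (simp add: cinner_def)
lemma cinner_zero_left[simp]: "cinner 0 x = 0" by (simp add: cinner_def)
lemma cinner_sum_right: "cinner x (\<Sum>i\<in>A. f i) = (\<Sum>i\<in>A. cinner x (f i))"
  by (induction A rule: infinite_finite_induct) (auto simp: cinner_add_right)
lemma cinner_sum_left: "cinner (\<Sum>i\<in>A. f i) x = (\<Sum>i\<in>A. cinner (f i) x)"
  by (induction A rule: infinite_finite_induct) (auto simp: cinner_add_left)
lemma cnj_cinner: "cnj (cinner x y) = cinner y x"
  by (simp add: cinner_def mult.commute)
lemma Re_cinner: "Re (cinner x y) = inner x y"
  by (simp add: cinner_def inner_vec_def inner_complex_def Re_sum)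
lemma cinner_self: "cinner x x = complex_of_real ((norm x)^2)"
proof -
  have "Im (cinner x x) = 0" by (simp add: cinner_def Im_sum)
  moreover have "Re (cinner x x) = (norm x)^2" by (simp add: Re_cinner power2_norm_eq_inner)
  ultimately show ?thesis by (simp add: complex_eq_iff)
qed
lemma cinner_adj: "cinner x (M *v y) = cinner (adjoint_mat M *v x) y"
proof -
  have "cinner x (M *v y) = (\<Sum>i\<in>UNIV. \<Sum>j\<in>UNIV. cnj (x$i) * M$i$j * y$j)"
    unfolding cinner_def matrix_vector_mult_def by (simp add: sum_distrib_left mult.assoc)
  also have "\<dots> = (\<Sum>j\<in>UNIV. \<Sum>i\<in>UNIV. cnj (x$i) * M$i$j * y$j)"
    by (rule sum.swap)
  also have "\<dots> = cinner (adjoint_mat M *v x) y"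
    unfolding cinner_def matrix_vector_mult_def adjoint_mat_def
    by (simp add: sum_distrib_left sum_distrib_right mult_ac)
  finally show ?thesis .
qed

lemma cinner_CS: "cmod (cinner x y) \<le> norm x * norm y"
proof -
  have "cmod (cinner x y) \<le> (\<Sum>i\<in>UNIV. cmod (x$i) * cmod (y$i))"
    unfolding cinner_def by (rule order_trans[OF norm_sum]) (simp add: norm_mult)
  also have "\<dots> \<le> L2_set (\<lambda>i. cmod (x$i)) UNIV * L2_set (\<lambda>i. cmod (y$i)) UNIV"
    using L2_set_mult_ineq[of "\<lambda>i. cmod (x$i)" "\<lambda>i. cmod (y$i)" UNIV] by simp
  finally show ?thesis by (simp add: norm_vec_def)
qed

lemma mvmult_scale: "M *v (c *s x) = c *s (M *v x)" for M :: "complex^'n^'m"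
  by (simp add: vec_eq_iff matrix_vector_mult_def sum_distrib_left mult_ac)

lemma mvmult_sum: "M *v (\<Sum>i\<in>A. f i) = (\<Sum>i\<in>A. M *v f i)" for M :: "complex^'n^'m"
  by (induction A rule: infinite_finite_induct) (auto simp: matrix_vector_right_distrib)

lemma real_quad_discr:
  fixes a b c :: real
  assumes "\<And>t. 0 \<le> a * t^2 + 2 * b * t + c" "0 \<le> a" "0 \<le> c"
  shows "b^2 \<le> a * c"
proof (cases "a = 0")
  case True
  have "b = 0"
  proof (rule ccontr)
    assume "b \<noteq> 0"
    have "0 \<le> 2 * b * (- (c + 1) / (2 * b)) + c" using assms(1)[of "- (c + 1) / (2 * b)"] True by simp
    also have "\<dots> = -1" using \<open>b \<noteq> 0\<close> by (simp add: field_simps)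
    finally show False by simp
  qed
  then show ?thesis using True by simp
next
  case False
  then have a: "a > 0" using assms(2) by simp
  have "0 \<le> a * (- b / a)^2 + 2 * b * (- b / a) + c" by (rule assms(1))
  also have "\<dots> = c - b^2 / a" using a by (simp add: field_simps power2_eq_square)
  finally have "b^2 / a \<le> c" by simp
  then show ?thesis using a by (simp add: field_simps mult.commute)
qed

locale dm =
  fixes \<rho> :: "complex^'n^'n"
  assumes herm: "hermitian \<rho>" and ps: "psd \<rho>"
begin

definition qf where "qf x y = cinner x (\<rho> *v y)"
definition Qf where "Qf x = Re (qf x x)"
definition N where "N x = sqrt (Qf x)"

lemma qf_cnj: "cnj (qf x y) = qf y x"
proof -
  have "qf x y = cinner (\<rho> *v x) y" unfolding qf_def cinner_adj using herm
    by (simp add: hermitian_def)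
  then show ?thesis by (simp add: cnj_cinner qf_def)
qed

lemma Qf_nonneg: "0 \<le> Qf x" using ps unfolding psd_def Qf_def qf_def by blast

lemma qf_self: "qf x x = complex_of_real (Qf x)"
  using ps unfolding psd_def Qf_def qf_def by (metis Reals_cases Re_complex_of_real)

lemma qf_add_left: "qf (x + y) z = qf x z + qf y z" by (simp add: qf_def cinner_add_left)
lemma qf_add_right: "qf x (y + z) = qf x y + qf x z"
  by (simp add: qf_def cinner_add_right matrix_vector_right_distrib)
lemma qf_scale_left: "qf (c *s x) z = cnj c * qf x z" by (simp add: qf_def cinner_scale_left)
lemma qf_scale_right: "qf x (c *s z) = c * qf x z" by (simp add: qf_def cinner_scale_right mvmult_scale)

lemma Qf_add: "Qf (x + y) = Qf x + 2 * Re (qf x y) + Qf y"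
proof -
  have "Re (qf y x) = Re (qf x y)" by (subst qf_cnj[symmetric]) simp
  then show ?thesis unfolding Qf_def by (simp add: qf_add_left qf_add_right)
qed

lemma Qf_scale: "Qf (c *s x) = (cmod c)^2 * Qf x"
proof -
  have "qf (c *s x) (c *s x) = (cnj c * c) * qf x x" by (simp add: qf_scale_left qf_scale_right)
  also have "cnj c * c = complex_of_real ((cmod c)^2)" by (metis complex_norm_square mult.commute)
  finally have "qf (c *s x) (c *s x) = complex_of_real ((cmod c)^2 * Qf x)" by (simp add: qf_self)
  then show ?thesis by (simp add: Qf_def[of "c *s x"])
qed

lemma Re_qf_CS: "(Re (qf x y))^2 \<le> Qf x * Qf y"
proof -
  have "(Re (qf x y))^2 \<le> Qf y * Qf x"
  proof (rule real_quad_discr)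
    fix t :: real
    have "Qf (x + complex_of_real t *s y) = Qf y * t^2 + 2 * Re (qf x y) * t + Qf x"
      by (simp add: Qf_add Qf_scale qf_scale_right)
    then show "0 \<le> Qf y * t^2 + 2 * Re (qf x y) * t + Qf x" using Qf_nonneg by metis
  qed (rule Qf_nonneg)+
  then show ?thesis by (simp add: mult.commute)
qed

lemma N_nonneg: "0 \<le> N x" by (simp add: N_def Qf_nonneg)
lemma N_sq: "(N x)^2 = Qf x" by (simp add: N_def Qf_nonneg)

lemma N_triangle: "N (x + y) \<le> N x + N y"
proof -
  have "Re (qf x y) \<le> N x * N y"
  proof -
    have "(Re (qf x y))^2 \<le> (N x * N y)^2" using Re_qf_CS by (simp add: power_mult_distrib N_sq)
    then show ?thesis by (rule power2_le_imp_le) (simp add: N_nonneg)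
  qed
  then have "(N (x + y))^2 \<le> (N x + N y)^2"
    by (simp add: N_sq Qf_add power2_sum power2_eq_square[symmetric])
  then show ?thesis using N_nonneg by (meson add_nonneg_nonneg power2_le_imp_le)
qed

lemma N_scale: "N (c *s x) = cmod c * N x"
  by (simp add: N_def Qf_scale real_sqrt_mult)

lemma N_sum: "N (\<Sum>i\<in>A. f i) \<le> (\<Sum>i\<in>A. N (f i))"
proof (induction A rule: infinite_finite_induct)
  case (infinite A) then show ?case by (simp add: N_def Qf_def qf_def)
next
  case empty then show ?case by (simp add: N_def Qf_def qf_def)
next
  case (insert x F)
  then show ?case using N_triangle[of "f x" "sum f F"] by simp
qed

lemma N_diff: "\<bar>N x - N y\<bar> \<le> N (x - y)"
proof -
  have "N x \<le> N (x - y) + N y" using N_triangle[of "x - y" y] by simp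
  moreover have "N y \<le> N (x - y) + N x"
  proof -
    have "N (y - x) = N (x - y)" using N_scale[of "-1" "x - y"]
      by (metis (no_types, lifting) add.inverse_inverse minus_diff_eq norm_minus_cancel norm_one
          scalar_mult_eq_scaleR scaleR_minus_left scaleR_one mult_1 vector_sneg_minus1)
    then show ?thesis using N_triangle[of "y - x" x] by simp
  qed
  ultimately show ?thesis by simp
qed

end



lemma axis_comp: "axis j (1::complex) $ k = (if k = j then 1 else 0)"
  by (simp add: axis_def)
lemma times_if1: "(c::complex) * (if P then 1 else 0) = (if P then c else 0)" by simp
lemma times_if1': "(if P then 1 else 0) * (c::complex) = (if P then c else 0)" by simp
lemma cnj_if0: "cnj (if P then a else 0) = (if P then cnj a else 0)" by simp
lemma if0_times: "(if P then a else 0) * (c::complex) = (if P then a * c else 0)" by simp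
lemma cnj_if1: "cnj (if P then 1 else 0) = (if P then 1 else 0)" by simp

lemma cinner_axis_left: "cinner (axis p 1) v = v $ p"
  unfolding cinner_def axis_comp cnj_if1 times_if1' by (simp add: sum.delta')
lemma mv_axis: "(M *v axis k 1) $ i = M $ i $ k" for M :: "complex^'n^'m"
  unfolding matrix_vector_mult_def axis_comp times_if1 by (simp add: sum.delta')

lemma sum_pair_UNIV: "(\<Sum>p\<in>UNIV. g p) = (\<Sum>i\<in>UNIV. \<Sum>k\<in>UNIV. g (i, k))"
  by (simp add: sum.cartesian_product split_def)

lemma (in dm) Qf_axis: "Qf (axis p 1) = Re (\<rho> $ p $ p)"
  by (simp add: Qf_def qf_def cinner_axis_left mv_axis)

lemma (in dm) N_le_norm:
  assumes tr: "trace \<rho> = 1"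
  shows "N x \<le> norm x"
proof -
  have "N x = N (\<Sum>p\<in>UNIV. (x$p) *s axis p 1)" by (simp add: basis_expansion)
  also have "\<dots> \<le> (\<Sum>p\<in>UNIV. N ((x$p) *s axis p 1))" by (rule N_sum)
  also have "\<dots> = (\<Sum>p\<in>UNIV. \<bar>cmod (x$p)\<bar> * \<bar>N (axis p 1)\<bar>)" by (simp add: N_scale N_nonneg)
  also have "\<dots> \<le> L2_set (\<lambda>p. cmod (x$p)) UNIV * L2_set (\<lambda>p. N (axis p 1)) UNIV"
    by (rule L2_set_mult_ineq)
  also have "L2_set (\<lambda>p. N (axis p 1)) UNIV = sqrt (Re (trace \<rho>))"
    by (simp add: L2_set_def N_sq Qf_axis trace_def Re_sum)
  also have "\<dots> = 1" using tr by simp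
  finally show ?thesis by (simp add: norm_vec_def)
qed

lemma tensor_axis_expand: "tensor_vec x f = (\<Sum>j\<in>UNIV. (f$j) *s tensor_vec x (axis j 1))"
  by (simp add: vec_eq_iff tensor_vec_def axis_def sum_component if_distrib cong: if_cong)

lemma qf_tensor_axis:
  fixes \<rho> :: "complex^('a::finite \<times> 'b::finite)^('a \<times> 'b)"
  shows "cinner (tensor_vec x (axis j 1)) (\<rho> *v tensor_vec x (axis j 1)) =
    (\<Sum>i\<in>UNIV. \<Sum>k\<in>UNIV. cnj (x$i) * (\<rho> $ (i,j) $ (k,j) * x$k))"
proof -
  have mv: "(\<rho> *v tensor_vec x (axis j 1)) $ p = (\<Sum>k\<in>UNIV. \<rho> $ p $ (k,j) * x$k)" for p
    unfolding matrix_vector_mult_def tensor_vec_def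
    by (subst sum_pair_UNIV) (simp add: axis_comp times_if1 sum.delta' if_distrib cong: if_cong)
  show ?thesis
    unfolding cinner_def mv
    apply (subst sum_pair_UNIV)
    apply (simp add: tensor_vec_def axis_comp times_if1 cnj_if0 if0_times sum.delta')
    by (simp add: sum_distrib_left)
qed

lemma sum_qf_tensor_axis:
  fixes \<rho> :: "complex^('a::finite \<times> 'b::finite)^('a \<times> 'b)"
  shows "(\<Sum>j\<in>UNIV. cinner (tensor_vec x (axis j 1)) (\<rho> *v tensor_vec x (axis j 1))) =
    cinner x (ptrace_B \<rho> *v x)"
proof -
  have "(\<Sum>j\<in>UNIV. cinner (tensor_vec x (axis j 1)) (\<rho> *v tensor_vec x (axis j 1)))
     = (\<Sum>j\<in>UNIV. \<Sum>i\<in>UNIV. \<Sum>k\<in>UNIV. cnj (x$i) * (\<rho> $ (i,j) $ (k,j) * x$k))"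
    by (simp add: qf_tensor_axis)
  also have "\<dots> = (\<Sum>i\<in>UNIV. \<Sum>j\<in>UNIV. \<Sum>k\<in>UNIV. cnj (x$i) * (\<rho> $ (i,j) $ (k,j) * x$k))"
    by (rule sum.swap)
  also have "\<dots> = (\<Sum>i\<in>UNIV. \<Sum>k\<in>UNIV. \<Sum>j\<in>UNIV. cnj (x$i) * (\<rho> $ (i,j) $ (k,j) * x$k))"
    by (rule sum.cong[OF refl], rule sum.swap)
  also have "\<dots> = cinner x (ptrace_B \<rho> *v x)"
    unfolding cinner_def matrix_vector_mult_def ptrace_B_def
    by (simp add: sum_distrib_left sum_distrib_right mult_ac)
  finally show ?thesis .
qed

lemma N_tensor:
  fixes \<rho> :: "complex^('a::finite \<times> 'b::finite)^('a \<times> 'b)"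
  assumes "dm \<rho>"
  shows "dm.N \<rho> (tensor_vec x f) \<le> norm f * sqrt (Re (cinner x (ptrace_B \<rho> *v x)))"
proof -
  interpret dm \<rho> by fact
  have "N (tensor_vec x f) \<le> (\<Sum>j\<in>UNIV. N ((f$j) *s tensor_vec x (axis j 1)))"
    by (subst tensor_axis_expand) (rule N_sum)
  also have "\<dots> = (\<Sum>j\<in>UNIV. \<bar>cmod (f$j)\<bar> * \<bar>N (tensor_vec x (axis j 1))\<bar>)" by (simp add: N_scale N_nonneg)
  also have "\<dots> \<le> L2_set (\<lambda>j. cmod (f$j)) UNIV * L2_set (\<lambda>j. N (tensor_vec x (axis j 1))) UNIV"
    by (rule L2_set_mult_ineq)
  also have "L2_set (\<lambda>j. N (tensor_vec x (axis j 1))) UNIV = sqrt (Re (cinner x (ptrace_B \<rho> *v x)))"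
    by (simp add: L2_set_def N_sq Qf_def qf_def flip: sum_qf_tensor_axis Re_sum)
  finally show ?thesis by (simp add: norm_vec_def)
qed



lemma adjoint_tensor: "adjoint_mat (tensor_mat A B) = tensor_mat (adjoint_mat A) (adjoint_mat B)"
  by (simp add: vec_eq_iff adjoint_mat_def tensor_mat_def)

lemma adjoint_mat1: "adjoint_mat (mat 1 :: complex^'n^'n) = mat 1"
  by (simp add: vec_eq_iff adjoint_mat_def mat_def)

lemma adjoint_diff: "adjoint_mat (A - B) = adjoint_mat A - adjoint_mat B"
  by (simp add: vec_eq_iff adjoint_mat_def)

lemma tensor_mat_diff: "tensor_mat (A - B) C = tensor_mat A C - tensor_mat B C"
  by (simp add: vec_eq_iff tensor_mat_def left_diff_distrib)

lemma tensor_mat_0: "tensor_mat 0 C = 0"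
  by (simp add: vec_eq_iff tensor_mat_def)

lemma tensor_mat_11: "tensor_mat (mat 1 :: complex^'a^'a) (mat 1 :: complex^'b^'b) = mat 1"
  by (auto simp: vec_eq_iff tensor_mat_def mat_def prod_eq_iff)

lemma tensor_mat_mult: "tensor_mat A B ** tensor_mat C D = tensor_mat (A ** C) (B ** D)"
  for A C :: "complex^'a::finite^'a" and B D :: "complex^'b::finite^'b"
  unfolding matrix_matrix_mult_def tensor_mat_def
  by (simp add: vec_eq_iff sum_pair_UNIV sum_product mult_ac)

lemma tensor_mat_vec: "tensor_mat M N *v tensor_vec u v = tensor_vec (M *v u) (N *v v)"
  for M :: "complex^'a::finite^'a" and N :: "complex^'b::finite^'b"
  unfolding matrix_vector_mult_def tensor_mat_def tensor_vec_def
  by (simp add: vec_eq_iff sum_pair_UNIV sum_product mult_ac)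

lemma cinner_tensor: "cinner (tensor_vec u v) (tensor_vec u' v') = cinner u u' * cinner v v'"
  for u u' :: "complex^'a::finite" and v v' :: "complex^'b::finite"
  unfolding cinner_def tensor_vec_def
  by (simp add: sum_pair_UNIV sum_product mult_ac)

lemma norm_from_cinner: "cinner x x = 1 \<Longrightarrow> norm x = 1"
proof -
  assume "cinner x x = 1"
  then have "(norm x)^2 = 1^2" using cinner_self[of x] by (metis of_real_eq_1_iff one_power2)
  then show ?thesis by (rule power2_eq_imp_eq) auto
qed

lemma op_norm_bound: "norm (M *v v) \<le> op_norm M * norm v" for M :: "complex^'n^'m"
  unfolding op_norm_def by (rule onorm) simp

lemma op_norm_nonneg: "0 \<le> op_norm M" for M :: "complex^'n^'m"
  unfolding op_norm_def by (rule onorm_pos_le) simp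



lemma matrix_diff_ldistrib: "A ** (B - C) = A ** B - A ** C" for A :: "complex^'n^'m"
  by (simp add: vec_eq_iff matrix_matrix_mult_def sum_subtractf right_diff_distrib)

lemma main_bound:
  fixes \<rho> :: "complex^('a::finite \<times> 'b::finite)^('a \<times> 'b)"
    and \<phi> :: "complex^('a \<times> 'b)"
    and P :: "complex^'a^'a"
    and k :: nat and \<eta> :: real
    and s :: "nat \<Rightarrow> real" and e :: "nat \<Rightarrow> complex^'a" and f :: "nat \<Rightarrow> complex^'b"
  assumes dmat: "density_matrix \<rho>"
    and nphi: "norm \<phi> = 1"
    and proj: "orth_proj P"
    and eta: "op_norm ((mat 1 - P) ** ptrace_B \<rho> ** (mat 1 - P)) \<le> \<eta>"
    and spos: "\<forall>i<k. s i > 0"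
    and eon: "\<forall>i<k. \<forall>j<k. cinner (e i) (e j) = (if i = j then 1 else 0)"
    and fon: "\<forall>i<k. \<forall>j<k. cinner (f i) (f j) = (if i = j then 1 else 0)"
    and phi: "\<phi> = (\<Sum>i<k. complex_of_real (s i) *s tensor_vec (e i) (f i))"
  shows "cmod (cinner \<phi> ((tensor_mat P (mat 1) ** \<rho> ** tensor_mat P (mat 1)) *v \<phi>)
               - cinner \<phi> (\<rho> *v \<phi>)) \<le> 2 * sqrt (real k) * sqrt \<eta>"
proof -
  have herm: "hermitian \<rho>" and ps: "psd \<rho>" and tr: "trace \<rho> = 1"
    using dmat by (auto simp: density_matrix_def)
  interpret dm \<rho> using herm ps by unfold_locales
  have Ph: "adjoint_mat P = P" and PP: "P ** P = P" using proj by (auto simp: orth_proj_def hermitian_def)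
  define T :: "complex^('a \<times> 'b)^('a \<times> 'b)" where "T = tensor_mat P (mat 1)"
  define Qm :: "complex^'a^'a" where "Qm = mat 1 - P"
  define a where "a = T *v \<phi>"
  define b where "b = tensor_mat Qm (mat 1) *v \<phi>"
  have Th: "adjoint_mat T = T" by (simp add: T_def adjoint_tensor Ph adjoint_mat1)
  have Qh: "adjoint_mat Qm = Qm" by (simp add: Qm_def adjoint_diff adjoint_mat1 Ph)
  have ab: "\<phi> = a + b"
    by (simp add: a_def b_def T_def Qm_def tensor_mat_diff tensor_mat_11 matrix_vector_mult_diff_rdistrib)
  have eta0: "0 \<le> \<eta>" using eta op_norm_nonneg order_trans by blast
  have lhs: "cinner \<phi> ((T ** \<rho> ** T) *v \<phi>) = complex_of_real (Qf a)"
  proof -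
    have "cinner \<phi> ((T ** \<rho> ** T) *v \<phi>) = cinner \<phi> (T *v (\<rho> *v a))"
      by (simp add: a_def matrix_vector_mul_assoc matrix_mul_assoc)
    also have "\<dots> = qf a a" by (simp add: cinner_adj Th qf_def a_def)
    finally show ?thesis by (simp add: qf_self)
  qed
  have rhs: "cinner \<phi> (\<rho> *v \<phi>) = complex_of_real (Qf \<phi>)" using qf_self qf_def by simp
  have "cinner a b = cinner \<phi> (T *v b)"
    unfolding a_def by (metis cinner_adj Th)
  also have "\<dots> = cinner \<phi> ((T ** tensor_mat Qm (mat 1)) *v \<phi>)"
    by (simp add: b_def matrix_vector_mul_assoc)
  also have "T ** tensor_mat Qm (mat 1) = 0"
  proof -
    have "P ** Qm = 0" by (simp add: Qm_def matrix_diff_ldistrib PP)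
    then show ?thesis by (simp add: T_def tensor_mat_mult tensor_mat_0)
  qed
  finally have "cinner a b = 0" by simp
  then have "orthogonal a b" unfolding orthogonal_def by (metis Re_cinner zero_complex.sel(1))
  then have "(norm \<phi>)^2 = (norm a)^2 + (norm b)^2" using ab norm_add_Pythagorean by metis
  then have na: "norm a \<le> 1" using nphi
    by (metis abs_norm_cancel le_add_same_cancel1 one_power2 power2_le_imp_le zero_le_power2 zero_le_one)
  have Na: "N a \<le> 1" using N_le_norm[OF tr, of a] na by simp
  have Nphi: "N \<phi> \<le> 1" using N_le_norm[OF tr, of \<phi>] nphi by simp
  have bexp: "b = (\<Sum>i<k. complex_of_real (s i) *s tensor_vec (Qm *v e i) (f i))"
    by (simp add: b_def phi mvmult_sum mvmult_scale tensor_mat_vec)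
  have each: "N (tensor_vec (Qm *v e i) (f i)) \<le> sqrt \<eta>" if "i < k" for i
  proof -
    have fi: "norm (f i) = 1" using fon that by (intro norm_from_cinner) auto
    have ei: "norm (e i) = 1" using eon that by (intro norm_from_cinner) auto
    have "Re (cinner (Qm *v e i) (ptrace_B \<rho> *v (Qm *v e i)))
        \<le> cmod (cinner (e i) ((Qm ** ptrace_B \<rho> ** Qm) *v e i))"
    proof -
      have "(Qm ** ptrace_B \<rho> ** Qm) *v e i = Qm *v (ptrace_B \<rho> *v (Qm *v e i))"
        by (simp add: matrix_vector_mul_assoc matrix_mul_assoc)
      then have "cinner (e i) ((Qm ** ptrace_B \<rho> ** Qm) *v e i) = cinner (Qm *v e i) (ptrace_B \<rho> *v (Qm *v e i))"
        by (metis cinner_adj Qh)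
      then show ?thesis by (simp add: complex_Re_le_cmod)
    qed
    also have "\<dots> \<le> norm (e i) * norm ((Qm ** ptrace_B \<rho> ** Qm) *v e i)" by (rule cinner_CS)
    also have "\<dots> \<le> norm (e i) * (op_norm (Qm ** ptrace_B \<rho> ** Qm) * norm (e i))"
      by (rule mult_left_mono[OF op_norm_bound norm_ge_zero])
    also have "\<dots> \<le> \<eta>" using eta ei by (simp add: Qm_def)
    finally have le: "Re (cinner (Qm *v e i) (ptrace_B \<rho> *v (Qm *v e i))) \<le> \<eta>" .
    have "N (tensor_vec (Qm *v e i) (f i)) \<le> norm (f i) * sqrt (Re (cinner (Qm *v e i) (ptrace_B \<rho> *v (Qm *v e i))))"
      by (rule N_tensor) unfold_locales
    also have "\<dots> \<le> sqrt \<eta>" using fi le by simp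
    finally show ?thesis .
  qed
  have "N b \<le> (\<Sum>i<k. N (complex_of_real (s i) *s tensor_vec (Qm *v e i) (f i)))"
    unfolding bexp by (rule N_sum)
  also have "\<dots> = (\<Sum>i<k. s i * N (tensor_vec (Qm *v e i) (f i)))"
    using spos by (intro sum.cong) (auto simp: N_scale)
  also have "\<dots> \<le> (\<Sum>i<k. s i * sqrt \<eta>)"
    using spos each by (intro sum_mono mult_left_mono) (auto simp: less_imp_le)
  also have "\<dots> = (\<Sum>i<k. s i) * sqrt \<eta>" by (simp add: sum_distrib_right)
  finally have Nb1: "N b \<le> (\<Sum>i<k. s i) * sqrt \<eta>" .
  have "cinner \<phi> \<phi> = (\<Sum>i<k. \<Sum>j<k. complex_of_real (s i) * complex_of_real (s j) *
          (cinner (e j) (e i) * cinner (f j) (f i)))"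
    unfolding phi by (simp add: cinner_sum_left cinner_sum_right cinner_scale_left cinner_scale_right
        cinner_tensor mult_ac sum_distrib_left)
  also have "\<dots> = (\<Sum>i<k. complex_of_real ((s i)^2))"
  proof (intro sum.cong refl)
    fix i assume i: "i \<in> {..<k}"
    have "(\<Sum>j<k. complex_of_real (s i) * complex_of_real (s j) * (cinner (e j) (e i) * cinner (f j) (f i)))
        = (\<Sum>j<k. if j = i then complex_of_real ((s i)^2) else 0)"
      using eon fon i by (intro sum.cong refl) (auto simp: power2_eq_square)
    also have "\<dots> = complex_of_real ((s i)^2)" using i by (simp add: sum.delta')
    finally show "(\<Sum>j<k. complex_of_real (s i) * complex_of_real (s j) * (cinner (e j) (e i) * cinner (f j) (f i)))
        = complex_of_real ((s i)^2)" .
  qed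
  finally have "(\<Sum>i<k. (s i)^2) = 1" using cinner_self[of \<phi>] nphi
    by (metis of_real_eq_1_iff of_real_sum one_power2)
  then have ssum: "(\<Sum>i<k. s i) \<le> sqrt (real k)"
    using L2_set_mult_ineq[of s "\<lambda>_. 1" "{..<k}"] spos
    by (simp add: L2_set_def abs_of_pos)
  have Nb: "N b \<le> sqrt (real k) * sqrt \<eta>"
    using Nb1 ssum eta0 by (meson mult_right_mono order_trans real_sqrt_ge_zero)
  have "cmod (cinner \<phi> ((T ** \<rho> ** T) *v \<phi>) - cinner \<phi> (\<rho> *v \<phi>)) = \<bar>Qf a - Qf \<phi>\<bar>"
    unfolding lhs rhs by (simp flip: of_real_diff)
  also have "\<bar>Qf a - Qf \<phi>\<bar> = \<bar>N a - N \<phi>\<bar> * (N a + N \<phi>)"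
  proof -
    have "Qf a - Qf \<phi> = (N a - N \<phi>) * (N a + N \<phi>)"
      by (simp add: N_sq[symmetric] power2_eq_square algebra_simps)
    then show ?thesis using N_nonneg[of a] N_nonneg[of \<phi>] by (simp add: abs_mult)
  qed
  also have "\<dots> \<le> N b * 2"
  proof (rule mult_mono)
    show "\<bar>N a - N \<phi>\<bar> \<le> N b" using N_diff[of \<phi> a] ab by (simp add: abs_minus_commute)
  qed (use Na Nphi N_nonneg in auto)
  also have "\<dots> \<le> 2 * sqrt (real k) * sqrt \<eta>" using Nb by simp
  finally show ?thesis by (simp add: T_def)
qed



lemma cinner_linear: "linear (\<lambda>x. cinner u x)"
  by (rule linearI) (simp add: cinner_add_right, simp add: cinner_def scaleR_vec_def sum_distrib_left
      scaleR_conv_of_real mult_ac)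

lemma cinner_continuous: "continuous_on A (\<lambda>x. cinner u x)"
  by (rule linear_continuous_on) (simp add: cinner_linear flip: linear_conv_bounded_linear)

lemma orthonormal_bound:
  fixes e :: "nat \<Rightarrow> complex^'a::finite"
  assumes on: "\<forall>i<m. \<forall>j<m. cinner (e i) (e j) = (if i = j then 1 else 0)"
  shows "m \<le> DIM(complex^'a)"
proof -
  let ?E = "e ` {..<m}"
  have inj: "inj_on e {..<m}"
  proof (rule inj_onI)
    fix i j assume "i \<in> {..<m}" "j \<in> {..<m}" "e i = e j"
    then show "i = j" using on by (metis lessThan_iff one_neq_zero)
  qed
  have po: "pairwise orthogonal ?E"
    unfolding pairwise_def orthogonal_def
    using on by (auto simp: Re_cinner[symmetric])
  have "0 \<notin> ?E" using on by auto (metis cinner_zero_left lessThan_iff zero_neq_one)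
  then have "independent ?E" using po pairwise_orthogonal_independent by blast
  then have "card ?E \<le> DIM(complex^'a)" using independent_bound by blast
  then show ?thesis using card_image[OF inj] by simp
qed

locale svd =
  fixes \<phi> :: "complex^('a::finite \<times> 'b::finite)"
begin

definition g :: "complex^'a \<Rightarrow> complex^'b" where
  "g x = (\<chi> j. \<Sum>i\<in>UNIV. cnj (x$i) * \<phi> $ (i, j))"

lemma g_add: "g (x + y) = g x + g y"
  by (simp add: g_def vec_eq_iff distrib_right sum.distrib)
lemma g_scale: "g (c *s x) = cnj c *s g x"
  by (simp add: g_def vec_eq_iff sum_distrib_left mult_ac)
lemma g_zero: "g 0 = 0" by (simp add: g_def vec_eq_iff)
lemma g_diff: "g (x - y) = g x - g y"
  by (simp add: g_def vec_eq_iff left_diff_distrib sum_subtractf)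
lemma g_sum: "g (\<Sum>i\<in>A. f i) = (\<Sum>i\<in>A. g (f i))"
  by (induction A rule: infinite_finite_induct) (auto simp: g_add g_zero)
lemma g_axis: "g (axis p 1) $ j = \<phi> $ (p, j)"
  unfolding g_def axis_comp cnj_if1 times_if1' by (simp add: sum.delta')

lemma g_linear: "linear g"
  by (rule linearI) (simp add: g_add, simp add: g_def vec_eq_iff scaleR_vec_def sum_distrib_left
      scaleR_conv_of_real mult_ac)

lemma g_cont: "continuous_on A g"
  by (rule linear_continuous_on) (simp add: g_linear flip: linear_conv_bounded_linear)

definition Inv :: "nat \<Rightarrow> (nat \<Rightarrow> complex^'a) \<Rightarrow> bool" where
  "Inv m e \<longleftrightarrow> (\<forall>i<m. \<forall>j<m. cinner (e i) (e j) = (if i = j then 1 else 0)) \<and>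
     (\<forall>i<m. g (e i) \<noteq> 0) \<and>
     (\<forall>i<m. \<forall>y. cinner (e i) y = 0 \<longrightarrow> cinner (g (e i)) (g y) = 0)"

end



lemma norm_scale_c: "norm (c *s v) = cmod c * norm v" for v :: "complex^'n"
proof -
  have "complex_of_real ((norm (c *s v))^2) = cnj c * c * cinner v v"
    unfolding cinner_self[symmetric] cinner_scale_left cinner_scale_right by (simp add: mult.assoc)
  also have "cnj c * c = complex_of_real ((cmod c)^2)" by (metis complex_norm_square mult.commute)
  also have "cinner v v = complex_of_real ((norm v)^2)" by (rule cinner_self)
  finally have "complex_of_real ((norm (c *s v))^2) = complex_of_real ((cmod c * norm v)^2)"
    by (simp only: of_real_mult[symmetric] power_mult_distrib)
  then have "(norm (c *s v))^2 = (cmod c * norm v)^2" using of_real_eq_iff by blast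
  then show ?thesis by (rule power2_eq_imp_eq) auto
qed

lemma norm_add_sq: "(norm (x + y))^2 = (norm x)^2 + 2 * Re (cinner x y) + (norm y)^2"
  for x y :: "complex^'n"
proof -
  have "complex_of_real ((norm (x + y))^2) = cinner x x + cinner x y + cinner y x + cinner y y"
    by (simp only: cinner_self[symmetric] cinner_add_left cinner_add_right) (simp add: add_ac)
  then have "(norm (x + y))^2 = Re (cinner x x + cinner x y + cinner y x + cinner y y)"
    by (metis Re_complex_of_real)
  also have "\<dots> = (norm x)^2 + 2 * Re (cinner x y) + (norm y)^2"
  proof -
    have "Re (cinner y x) = Re (cinner x y)" by (subst cnj_cinner[symmetric]) simp
    then show ?thesis by (simp add: cinner_self)
  qed
  finally show ?thesis .
qed

lemma cinner_neg_right: "cinner x (- v) = - cinner x v"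
  by (simp add: cinner_def sum_negf)

context svd begin

lemma step:
  assumes inv: "Inv m e"
    and x1S: "\<forall>i<m. cinner (e i) x1 = 0" and gx1: "g x1 \<noteq> 0"
  shows "\<exists>e'. Inv (Suc m) e'"
proof -
  have eon: "\<forall>i<m. \<forall>j<m. cinner (e i) (e j) = (if i = j then 1 else 0)"
    and ge: "\<forall>i<m. g (e i) \<noteq> 0"
    and eig: "\<forall>i<m. \<forall>y. cinner (e i) y = 0 \<longrightarrow> cinner (g (e i)) (g y) = 0"
    using inv unfolding Inv_def by auto
  define S where "S = {x. \<forall>i<m. cinner (e i) x = 0}"
  define K where "K = S \<inter> sphere 0 1"
  define F where "F y = (norm (g y))^2" for y
  have Sadd: "x + y \<in> S" if "x \<in> S" "y \<in> S" for x y
    using that by (simp add: S_def cinner_add_right)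
  have Sscale: "c *s x \<in> S" if "x \<in> S" for x c
    using that by (simp add: S_def cinner_scale_right)
  have "S = (\<Inter>i\<in>{..<m}. {x. cinner (e i) x = 0})" by (auto simp: S_def)
  moreover have "closed {x. cinner (e i) x = 0}" for i
    by (rule closed_Collect_eq) (auto intro: cinner_continuous continuous_on_const)
  ultimately have "closed S" by auto
  then have cK: "compact K" unfolding K_def by auto
  have F_scale: "F (c *s x) = (cmod c)^2 * F x" for c x
    by (simp add: F_def g_scale norm_scale_c power_mult_distrib)
  have x10: "x1 \<noteq> 0" using gx1 g_zero by auto
  define u1 where "u1 = complex_of_real (1 / norm x1) *s x1"
  have u1K: "u1 \<in> K" using x10 x1S
    by (simp add: K_def u1_def Sscale S_def norm_scale_c cinner_scale_right norm_divide)
  have "F x1 > 0" using gx1 by (simp add: F_def)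
  then have Fu1: "F u1 > 0" using x10 by (simp add: u1_def F_scale norm_divide)
  have "continuous_on K F" unfolding F_def by (intro continuous_intros g_cont)
  then obtain x0 where x0K: "x0 \<in> K" and x0max: "\<forall>y\<in>K. F y \<le> F x0"
    using continuous_attains_sup[OF cK] u1K by blast
  define c where "c = F x0"
  have cpos: "c > 0" using x0max u1K Fu1 by (auto simp: c_def intro: less_le_trans)
  have x0S: "x0 \<in> S" and nx0: "norm x0 = 1" using x0K by (auto simp: K_def)
  have hom: "F y \<le> c * (norm y)^2" if "y \<in> S" for y
  proof (cases "y = 0")
    case True then show ?thesis by (simp add: F_def g_zero)
  next
    case False
    define u where "u = complex_of_real (1 / norm y) *s y"
    have "u \<in> K" using False that by (simp add: K_def u_def Sscale norm_scale_c norm_divide)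
    then have "F u \<le> c" using x0max c_def by auto
    moreover have "F u = F y / (norm y)^2" by (simp add: u_def F_scale power_divide norm_divide)
    ultimately show ?thesis using False by (simp add: divide_le_eq mult.commute)
  qed
  have fo_re: "Re (cinner (g x0) (g y)) = 0" if yS: "y \<in> S" and y0: "cinner x0 y = 0" for y
  proof -
    define R where "R = Re (cinner (g x0) (g y))"
    have "0 \<le> (c * (norm y)^2 - F y) * t^2 + 2 * (- R) * t + 0" for t :: real
    proof -
      have "F (x0 + complex_of_real t *s y) \<le> c * (norm (x0 + complex_of_real t *s y))^2"
        using hom Sadd Sscale x0S yS by blast
      moreover have "F (x0 + complex_of_real t *s y) = c + 2 * t * R + t^2 * F y"
        by (simp add: F_def c_def R_def g_add g_scale norm_add_sq cinner_scale_right norm_scale_c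
            power_mult_distrib)
      moreover have "(norm (x0 + complex_of_real t *s y))^2 = 1 + t^2 * (norm y)^2"
        using nx0 y0 by (simp add: norm_add_sq cinner_scale_right norm_scale_c power_mult_distrib)
      ultimately show ?thesis by (simp add: algebra_simps)
    qed
    then have "(- R)^2 \<le> (c * (norm y)^2 - F y) * 0"
      by (rule real_quad_discr) (use hom yS in auto)
    then show ?thesis unfolding R_def by simp
  qed
  have fo: "cinner (g x0) (g y) = 0" if yS: "y \<in> S" and y0: "cinner x0 y = 0" for y
  proof -
    have "Re (cinner (g x0) (g (\<i> *s y))) = 0"
      using fo_re Sscale yS y0 by (simp add: cinner_scale_right)
    then have "Im (cinner (g x0) (g y)) = 0" by (simp add: g_scale cinner_scale_right cinner_neg_right)
    moreover have "Re (cinner (g x0) (g y)) = 0" using fo_re yS y0 by blast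
    ultimately show ?thesis by (simp add: complex_eq_iff)
  qed
  have x0e: "cinner (e i) x0 = 0" if "i < m" for i using x0S that by (simp add: S_def)
  have ex0: "cinner x0 (e i) = 0" if "i < m" for i using x0e[OF that] cnj_cinner[of "e i" x0] by simp
  have fo_all: "cinner (g x0) (g y) = 0" if y0: "cinner x0 y = 0" for y
  proof -
    define y' where "y' = y - (\<Sum>i<m. cinner (e i) y *s e i)"
    have "cinner (e j) y' = 0" if "j < m" for j
    proof -
      have "(\<Sum>i<m. cinner (e i) y * cinner (e j) (e i)) = (\<Sum>i<m. if i = j then cinner (e j) y else 0)"
        using eon that by (intro sum.cong refl) auto
      then show ?thesis using that
        by (simp add: y'_def cinner_diff_right cinner_sum_right cinner_scale_right sum.delta')
    qed
    then have y'S: "y' \<in> S" by (simp add: S_def)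
    have "cinner x0 y' = 0" using y0 ex0
      by (simp add: y'_def cinner_diff_right cinner_sum_right cinner_scale_right)
    then have gy': "cinner (g x0) (g y') = 0" using fo y'S by blast
    have ge0: "cinner (g x0) (g (e i)) = 0" if "i < m" for i
      using eig x0e[OF that] that cnj_cinner[of "g (e i)" "g x0"] by auto
    have "g y = g y' + (\<Sum>i<m. cnj (cinner (e i) y) *s g (e i))"
      by (simp add: y'_def g_diff g_sum g_scale)
    then show ?thesis using gy' ge0
      by (simp add: cinner_add_right cinner_sum_right cinner_scale_right)
  qed
  have gx0: "g x0 \<noteq> 0" using cpos by (auto simp: c_def F_def)
  have x0x0: "cinner x0 x0 = 1" using nx0 by (simp add: cinner_self)
  define e' where "e' = e(m := x0)"
  have "Inv (Suc m) e'"
    unfolding Inv_def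
  proof (intro conjI allI impI)
    fix i j assume "i < Suc m" "j < Suc m"
    then show "cinner (e' i) (e' j) = (if i = j then 1 else 0)"
      using eon x0e ex0 x0x0 by (auto simp: e'_def less_Suc_eq)
  next
    fix i assume "i < Suc m"
    then show "g (e' i) \<noteq> 0" using ge gx0 by (auto simp: e'_def less_Suc_eq)
  next
    fix i y assume "i < Suc m" "cinner (e' i) y = 0"
    then show "cinner (g (e' i)) (g y) = 0" using eig fo_all by (auto simp: e'_def less_Suc_eq)
  qed
  then show ?thesis by blast
qed

end



lemma tensor_vec_scale2: "tensor_vec u (c *s v) = c *s tensor_vec u v"
  by (simp add: vec_eq_iff tensor_vec_def mult_ac)

context svd begin

lemma exists_decomp: "\<exists>k. schmidt_decomp \<phi> k"
proof -
  let ?P = "\<lambda>m. \<exists>e. Inv m e"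
  have P0: "?P 0" by (simp add: Inv_def)
  have bnd: "m \<le> DIM(complex^'a)" if "?P m" for m
    using that orthonormal_bound unfolding Inv_def by blast
  define M where "M = Greatest ?P"
  have "?P M" unfolding M_def by (rule GreatestI_nat[where P="?P", OF P0 bnd])
  then obtain e where inv: "Inv M e" by blast
  have eon: "\<forall>i<M. \<forall>j<M. cinner (e i) (e j) = (if i = j then 1 else 0)"
    and ge: "\<forall>i<M. g (e i) \<noteq> 0"
    and eig: "\<forall>i<M. \<forall>y. cinner (e i) y = 0 \<longrightarrow> cinner (g (e i)) (g y) = 0"
    using inv unfolding Inv_def by auto
  have null: "g x = 0" if "\<forall>i<M. cinner (e i) x = 0" for x
  proof (rule ccontr)
    assume "g x \<noteq> 0"
    then have "?P (Suc M)" using step inv that by blast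
    then have "Suc M \<le> M" unfolding M_def by (rule Greatest_le_nat[where P="?P", OF _ bnd])
    then show False by simp
  qed
  have gax: "g (axis p 1) = (\<Sum>i<M. (e i $ p) *s g (e i))" for p
  proof -
    define x where "x = axis p (1::complex)"
    define x' where "x' = x - (\<Sum>i<M. cinner (e i) x *s e i)"
    have "cinner (e j) x' = 0" if "j < M" for j
    proof -
      have "(\<Sum>i<M. cinner (e i) x * cinner (e j) (e i)) = (\<Sum>i<M. if i = j then cinner (e j) x else 0)"
        using eon that by (intro sum.cong refl) auto
      then show ?thesis using that
        by (simp add: x'_def cinner_diff_right cinner_sum_right cinner_scale_right sum.delta')
    qed
    then have "g x' = 0" using null by blast
    then have "g x = (\<Sum>i<M. cnj (cinner (e i) x) *s g (e i))"
      by (simp add: x'_def g_diff g_sum g_scale)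
    also have "\<dots> = (\<Sum>i<M. (e i $ p) *s g (e i))"
      by (simp add: cnj_cinner x_def cinner_axis_left)
    finally show ?thesis by (simp add: x_def)
  qed
  define s where "s i = norm (g (e i))" for i
  define f where "f i = complex_of_real (1 / s i) *s g (e i)" for i
  have spos: "\<forall>i<M. s i > 0" using ge by (simp add: s_def)
  have fon: "\<forall>i<M. \<forall>j<M. cinner (f i) (f j) = (if i = j then 1 else 0)"
  proof (intro allI impI)
    fix i j assume ij: "i < M" "j < M"
    show "cinner (f i) (f j) = (if i = j then 1 else 0)"
    proof (cases "i = j")
      case True
      then show ?thesis using spos ij
        by (simp add: f_def cinner_self s_def norm_scale_c norm_divide power2_eq_square)
    next
      case False
      then have "cinner (g (e i)) (g (e j)) = 0" using eig eon ij by auto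
      then show ?thesis using False by (simp add: f_def cinner_scale_left cinner_scale_right)
    qed
  qed
  have "\<phi> = (\<Sum>i<M. tensor_vec (e i) (g (e i)))"
  proof (subst vec_eq_iff, intro allI)
    fix q :: "'a \<times> 'b"
    obtain p j where q: "q = (p, j)" by (cases q)
    have "\<phi> $ q = g (axis p 1) $ j" by (simp add: q g_axis)
    also have "\<dots> = (\<Sum>i<M. tensor_vec (e i) (g (e i))) $ q"
      by (simp add: gax sum_component q tensor_vec_def)
    finally show "\<phi> $ q = (\<Sum>i<M. tensor_vec (e i) (g (e i))) $ q" .
  qed
  also have "\<dots> = (\<Sum>i<M. complex_of_real (s i) *s tensor_vec (e i) (f i))"
    using spos by (intro sum.cong refl) (auto simp: f_def tensor_vec_scale2)
  finally have "\<phi> = (\<Sum>i<M. complex_of_real (s i) *s tensor_vec (e i) (f i))" .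
  then have "schmidt_decomp \<phi> M"
    unfolding schmidt_decomp_def using spos eon fon by blast
  then show ?thesis by blast
qed

end

theorem lemmaB11:
  fixes \<rho> :: "complex^('a::finite \<times> 'b::finite)^('a \<times> 'b)"
    and \<phi> :: "complex^('a \<times> 'b)"
    and P :: "complex^'a^'a"
    and r :: nat and \<eta> :: real
  assumes "density_matrix \<rho>"
    and "norm \<phi> = 1"
    and "schmidt_rank \<phi> \<le> r"
    and "orth_proj P"
    and "op_norm ((mat 1 - P) ** ptrace_B \<rho> ** (mat 1 - P)) \<le> \<eta>"
  shows "cmod (cinner \<phi> ((tensor_mat P (mat 1) ** \<rho> ** tensor_mat P (mat 1)) *v \<phi>)
               - cinner \<phi> (\<rho> *v \<phi>)) \<le> 2 * real r * sqrt \<eta>"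
proof -
  have "schmidt_decomp \<phi> (schmidt_rank \<phi>)"
    unfolding schmidt_rank_def by (rule LeastI_ex) (rule svd.exists_decomp)
  then obtain s e f where
       spos: "\<forall>i<schmidt_rank \<phi>. s i > 0"
    and eon: "\<forall>i<schmidt_rank \<phi>. \<forall>j<schmidt_rank \<phi>. cinner (e i) (e j) = (if i = j then 1 else 0)"
    and fon: "\<forall>i<schmidt_rank \<phi>. \<forall>j<schmidt_rank \<phi>. cinner (f i) (f j) = (if i = j then 1 else 0)"
    and phi: "\<phi> = (\<Sum>i<schmidt_rank \<phi>. complex_of_real (s i) *s tensor_vec (e i) (f i))"
    unfolding schmidt_decomp_def by blast
  let ?k = "schmidt_rank \<phi>"
  have main: "cmod (cinner \<phi> ((tensor_mat P (mat 1) ** \<rho> ** tensor_mat P (mat 1)) *v \<phi>)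
               - cinner \<phi> (\<rho> *v \<phi>)) \<le> 2 * sqrt (real ?k) * sqrt \<eta>"
    by (rule main_bound[OF assms(1,2,4,5) spos eon fon phi])
  have "sqrt (real ?k) \<le> real ?k"
  proof (cases "?k = 0")
    case False
    then have "1 \<le> sqrt (real ?k)" by simp
    then have "sqrt (real ?k) * 1 \<le> sqrt (real ?k) * sqrt (real ?k)" by (intro mult_left_mono) auto
    then show ?thesis by simp
  qed simp
  also have "\<dots> \<le> real r" using assms(3) by simp
  finally have "sqrt (real ?k) \<le> real r" .
  moreover have "0 \<le> \<eta>" using assms(5) op_norm_nonneg order_trans by blast
  ultimately have "2 * sqrt (real ?k) * sqrt \<eta> \<le> 2 * real r * sqrt \<eta>"
    by (intro mult_right_mono) auto
  with main show ?thesis by linarith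
qed


end
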